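(* The map $n:\mathbb{T}\to\mathbb{N}$ defined below is a bijection.
   Context: Let $\mathbb{T}$ be the set of finite terms defined inductively by: the constant $e\in\mathbb{T}$; and if $X\in\mathbb{T}$ and $Xs=[X_1,\dots,X_k]$ ($k\ge 0$) is a finite list of elements of $\mathbb{T}$, then $v(X,Xs)\in\mathbb{T}$ and $w(X,Xs)\in\mathbb{T}$. Write $[\,]$ for the empty list and $[Y|Xs]$ for the list with first element $Y$ followed by the list $Xs$. Define $n:\mathbb{T}\to\mathbb{N}$ recursively by: $n(e)=0$; $n(v(X,[\,]))=2^{n(X)+1}-1$; $n(v(X,[Y|Xs]))=(n(w(Y,Xs))+1)\,2^{n(X)+1}-1$; $n(w(X,[\,]))=2^{n(X)+2}-2$; $n(w(X,[Y|Xs]))=(n(v(Y,Xs))+2)\,2^{n(X)+1}-2$. *)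

theory Defs
  imports Main
begin

datatype T = e | v T "T list" | w T "T list"

fun n :: "T \<Rightarrow> nat" where
  "n e = 0"
| "n (v X []) = 2 ^ (n X + 1) - 1"
| "n (v X (Y # Xs)) = (n (w Y Xs) + 1) * 2 ^ (n X + 1) - 1"
| "n (w X []) = 2 ^ (n X + 2) - 2"
| "n (w X (Y # Xs)) = (n (v Y Xs) + 2) * 2 ^ (n X + 1) - 2"

end

theory Submission
  imports Defs
begin

lemma odd_unique: "odd (q::nat) \<Longrightarrow> odd q' \<Longrightarrow> 2^i*q = 2^j*q' \<Longrightarrow> i = j \<and> q = q'"
proof (induction i arbitrary: j)
  case 0
  then show ?case by (cases j) auto
next
  case (Suc i)
  then show ?case by (cases j) auto
qed

lemma odd_exists: "(m::nat) > 0 \<Longrightarrow> \<exists>j q. m = 2^j*q \<and> odd q"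
proof (induction m rule: less_induct)
  case (less m)
  show ?case
  proof (cases "odd m")
    case True
    then show ?thesis by (rule_tac x=0 in exI) auto
  next
    case False
    then obtain h where h: "m = 2*h" by blast
    with less have "h < m" "h > 0" by auto
    with less obtain j q where "h = 2^j*q" "odd q" by blast
    with h show ?thesis by (rule_tac x="Suc j" in exI) auto
  qed
qed

lemma L1: "n (v X []) + 1 = 2^(n X+1) * 1"
proof -
  have "(2::nat)^(n X+1) \<ge> 1" by simp
  moreover have "n (v X []) = 2^(n X+1) - 1" by simp
  ultimately show ?thesis by linarith
qed
lemma L2: "n (v X (Y#Xs)) + 1 = 2^(n X+1) * (n (w Y Xs) + 1)"
proof -
  have "(2::nat)^(n X+1) \<ge> 1" by simp
  then have "(n (w Y Xs) + 1) * 2 ^ (n X + 1) \<ge> 1 * 1" by (intro mult_mono) auto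
  moreover have "n (v X (Y#Xs)) = (n (w Y Xs) + 1) * 2 ^ (n X + 1) - 1" by simp
  ultimately have "n (v X (Y#Xs)) + 1 = (n (w Y Xs) + 1) * 2 ^ (n X + 1)" by linarith
  then show ?thesis by (simp only: mult.commute)
qed
lemma L3: "n (w X []) + 2 = 2^(n X+1+1) * 1"
proof -
  have "(2::nat) ^ (n X + 2) \<ge> 2^1" by (rule power_increasing) auto
  then have "(2::nat) ^ (n X + 2) \<ge> 2" by simp
  moreover have "n (w X []) = 2 ^ (n X + 2) - 2" by simp
  moreover have "n X + 2 = n X + 1 + 1" by simp
  ultimately have "n (w X []) + 2 = 2 ^ (n X + 2)" by linarith
  then show ?thesis by (simp only: mult_1_right \<open>n X + 2 = n X + 1 + 1\<close>)
qed
lemma L4: "n (w X (Y#Xs)) + 2 = 2^(n X+1) * (n (v Y Xs) + 2)"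
proof -
  have "(2::nat)^(n X+1) \<ge> 1" by simp
  then have "(n (v Y Xs) + 2) * 2 ^ (n X + 1) \<ge> 2 * 1" by (intro mult_mono) auto
  moreover have "n (w X (Y#Xs)) = (n (v Y Xs) + 2) * 2 ^ (n X + 1) - 2" by simp
  ultimately have "n (w X (Y#Xs)) + 2 = (n (v Y Xs) + 2) * 2 ^ (n X + 1)" by linarith
  then show ?thesis by (simp only: mult.commute)
qed

lemma odd_v: "odd (n (v X Xs))"
proof (cases Xs)
  case Nil
  have "even (n (v X Xs) + 1)" using L1[of X] Nil by simp
  then show ?thesis by simp
next
  case (Cons Y Ys)
  have "even (n (v X Xs) + 1)" using L2[of X Y Ys] Cons by simp
  then show ?thesis by simp
qed

lemma even_w: "even (n (w X Xs)) \<and> n (w X Xs) > 0"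
proof (cases Xs)
  case Nil
  have ev: "even (n (w X Xs) + 2)" using L3[of X] Nil by simp
  have "(2::nat)^(n X+1+1) \<ge> 2^2" by (rule power_increasing) auto
  then have "(2::nat)^(n X+1+1) \<ge> 4" by simp
  moreover have "n (w X []) + 2 = 2^(n X+1+1) * 1" by (rule L3)
  ultimately have "n (w X []) \<ge> 2" by linarith
  then have "n (w X Xs) \<ge> 2" using Nil by simp
  with ev show ?thesis by simp
next
  case (Cons Y Ys)
  have ev: "even (n (w X Xs) + 2)" using L4[of X Y Ys] Cons by simp
  have "2^(n X+1) * (n (v Y Ys) + 2) \<ge> 2*2" by (rule mult_mono) auto
  moreover have "n (w X (Y#Ys)) + 2 = 2^(n X+1)*(n (v Y Ys)+2)" by (rule L4)
  ultimately have "n (w X (Y#Ys)) \<ge> 2" by linarith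
  then have "n (w X Xs) \<ge> 2" using Cons by simp
  with ev show ?thesis by simp
qed

lemma odd_v1: "odd (n (v Y Ys) + 2)" using odd_v by simp
lemma odd_w1: "odd (n (w Y Ys) + 1)" using even_w by simp

lemma is_v: assumes that: "n t = n (v X Xs)" shows "\<exists>X' Xs'. t = v X' Xs'"
proof (cases t)
  case e then show ?thesis using that odd_v[of X Xs] by (simp del: n.simps add: n.simps(1))
next
  case (w Y Ys) then show ?thesis using that odd_v[of X Xs] even_w[of Y Ys] by (simp del: n.simps)
qed auto
lemma is_w: assumes that: "n t = n (w X Xs)" shows "\<exists>X' Xs'. t = w X' Xs'"
proof (cases t)
  case e then show ?thesis using that even_w[of X Xs] by (simp del: n.simps add: n.simps(1))
next
  case (v Y Ys) then show ?thesis using that odd_v[of Y Ys] even_w[of X Xs] by (simp del: n.simps)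
qed auto

lemma inj_aux: "n s = n t \<Longrightarrow> s = t"
proof (induction s arbitrary: t rule: measure_induct_rule[of size])
  case (less s)
  show ?case
  proof (cases s)
    case e
    show ?thesis
    proof (cases t)
      case (v X Xs) then show ?thesis using less.prems \<open>s = e\<close> odd_v[of X Xs] by simp
    next
      case (w X Xs) then show ?thesis using less.prems \<open>s = e\<close> even_w[of X Xs] by simp
    qed (simp add: \<open>s = e\<close>)
  next
    case (v X Xs)
    then obtain X' Xs' where t: "t = v X' Xs'"
    proof -
      have "n (v X Xs) = n t" using less.prems v by (simp only:)
      from is_v[OF this[symmetric]] show ?thesis using that by blast
    qed
    have eq: "n (v X Xs) = n (v X' Xs')" using less.prems v t by (simp only:)
    show ?thesis
    proof (cases Xs)
      case Nil
      show ?thesis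
      proof (cases Xs')
        case Nil
        have "2^(n X+1) * 1 = 2^(n X'+1) * (1::nat)"
          using L1[of X] L1[of X'] eq[unfolded \<open>Xs = []\<close> Nil] by linarith
        from odd_unique[OF _ _ this] have "n X = n X'" by simp
        then have "X = X'" using less.IH[of X] v by simp
        then show ?thesis using v t Nil \<open>Xs = []\<close> by simp
      next
        case (Cons Y' Ys')
        have "2^(n X+1) * 1 = 2^(n X'+1) * (n (w Y' Ys') + 1)"
          using L1[of X] L2[of X' Y' Ys'] eq[unfolded \<open>Xs = []\<close> Cons] by linarith
        from odd_unique[OF _ odd_w1 this] have "1 = n (w Y' Ys') + 1" by simp
        then show ?thesis using even_w[of Y' Ys'] by simp
      qed
    next
      case (Cons Y Ys)
      show ?thesis
      proof (cases Xs')
        case Nil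
        have "2^(n X'+1) * 1 = 2^(n X+1) * (n (w Y Ys) + 1)"
          using L1[of X'] L2[of X Y Ys] eq[unfolded \<open>Xs = Y#Ys\<close> Nil] by linarith
        from odd_unique[OF _ odd_w1 this] have "1 = n (w Y Ys) + 1" by simp
        then show ?thesis using even_w[of Y Ys] by simp
      next
        case (Cons Y' Ys')
        have "2^(n X+1) * (n (w Y Ys) + 1) = 2^(n X'+1) * (n (w Y' Ys') + 1)"
          using L2[of X Y Ys] L2[of X' Y' Ys'] eq[unfolded \<open>Xs = Y#Ys\<close> Cons] by linarith
        from odd_unique[OF odd_w1 odd_w1 this] have "n X = n X' \<and> n (w Y Ys) = n (w Y' Ys')" by simp
        then have "X = X'" "w Y Ys = w Y' Ys'"
          using less.IH[of X] less.IH[of "w Y Ys"] v \<open>Xs = Y#Ys\<close> by auto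
        then show ?thesis using v t Cons \<open>Xs = Y#Ys\<close> by simp
      qed
    qed
  next
    case (w X Xs)
    then obtain X' Xs' where t: "t = w X' Xs'"
    proof -
      have "n (w X Xs) = n t" using less.prems w by (simp only:)
      from is_w[OF this[symmetric]] show ?thesis using that by blast
    qed
    have eq: "n (w X Xs) = n (w X' Xs')" using less.prems w t by (simp only:)
    show ?thesis
    proof (cases Xs)
      case Nil
      show ?thesis
      proof (cases Xs')
        case Nil
        have "2^(n X+1+1) * 1 = 2^(n X'+1+1) * (1::nat)"
          using L3[of X] L3[of X'] eq[unfolded \<open>Xs = []\<close> Nil] by linarith
        from odd_unique[OF _ _ this] have "n X = n X'" by simp
        then have "X = X'" using less.IH[of X] w by simp
        then show ?thesis using w t Nil \<open>Xs = []\<close> by simp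
      next
        case (Cons Y' Ys')
        have "2^(n X+1+1) * 1 = 2^(n X'+1) * (n (v Y' Ys') + 2)"
          using L3[of X] L4[of X' Y' Ys'] eq[unfolded \<open>Xs = []\<close> Cons] by linarith
        from odd_unique[OF _ odd_v1 this] have "1 = n (v Y' Ys') + 2" by simp
        then show ?thesis by simp
      qed
    next
      case (Cons Y Ys)
      show ?thesis
      proof (cases Xs')
        case Nil
        have "2^(n X'+1+1) * 1 = 2^(n X+1) * (n (v Y Ys) + 2)"
          using L3[of X'] L4[of X Y Ys] eq[unfolded \<open>Xs = Y#Ys\<close> Nil] by linarith
        from odd_unique[OF _ odd_v1 this] have "1 = n (v Y Ys) + 2" by simp
        then show ?thesis by simp
      next
        case (Cons Y' Ys')
        have "2^(n X+1) * (n (v Y Ys) + 2) = 2^(n X'+1) * (n (v Y' Ys') + 2)"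
          using L4[of X Y Ys] L4[of X' Y' Ys'] eq[unfolded \<open>Xs = Y#Ys\<close> Cons] by linarith
        from odd_unique[OF odd_v1 odd_v1 this] have "n X = n X' \<and> n (v Y Ys) = n (v Y' Ys')" by simp
        then have "X = X'" "v Y Ys = v Y' Ys'"
          using less.IH[of X] less.IH[of "v Y Ys"] w \<open>Xs = Y#Ys\<close> by auto
        then show ?thesis using w t Cons \<open>Xs = Y#Ys\<close> by simp
      qed
    qed
  qed
qed

lemma surj_aux: "\<exists>t. n t = k"
proof (induction k rule: less_induct)
  case (less k)
  show ?case
  proof (cases "k = 0")
    case True then show ?thesis by (rule_tac x=e in exI) simp
  next
    case k0: False
    show ?thesis
    proof (cases "odd k")
      case True
      obtain j q where jq: "k + 1 = 2^j*q" "odd q" using odd_exists[of "k+1"] by auto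
      have "j \<noteq> 0"
      proof
        assume "j = 0"
        then have "k + 1 = q" using jq(1) by (simp only: power_0 mult_1)
        then show False using jq(2) True by presburger
      qed
      then obtain a where a: "j = Suc a" by (cases j) auto
      have q0: "q \<ge> 1" using jq by (cases q) auto
      have "a < 2^a" by (rule less_exp)
      moreover have "2^a \<le> 2^a*q" using q0 by simp
      moreover have "k + 1 = 2*(2^a*q)" using jq a by simp
      ultimately have "a < k" by linarith
      then obtain X where X: "n X = a" using less.IH by blast
      show ?thesis
      proof (cases "q = 1")
        case True
        then have "n (v X []) = k" using X jq a by simp
        then show ?thesis by blast
      next
        case False
        then have q3: "q \<ge> 3" using q0 jq by presburger
        have "2*q \<le> 2^j*q" using a by simp
        then have "q - 1 < k" using jq q3 by linarith
        then obtain t' where t': "n t' = q - 1" using less.IH by blast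
        have ev: "even (q - 1)" "q - 1 > 0" using jq q3 by auto
        obtain Y Ys where tY: "t' = w Y Ys"
        proof (cases t')
          case e then show ?thesis using t' ev by simp
        next
          case (v A B) then show ?thesis using t' ev odd_v[of A B] by (simp del: n.simps)
        qed
        have "n (v X (Y#Ys)) + 1 = 2^(n X+1) * (n (w Y Ys) + 1)" by (rule L2)
        also have "\<dots> = 2^j * q" using X a t' tY q3 by simp
        finally have "n (v X (Y#Ys)) = k" using jq by linarith
        then show ?thesis by blast
      qed
    next
      case False
      obtain j q where jq: "k + 2 = 2^j*q" "odd q" using odd_exists[of "k+2"] by auto
      have "j \<noteq> 0"
      proof
        assume "j = 0"
        then have "k + 2 = q" using jq(1) by (simp only: power_0 mult_1)
        then show False using jq(2) False by presburger
      qed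
      then obtain a where a: "j = Suc a" by (cases j) auto
      have q0: "q \<ge> 1" using jq by (cases q) auto
      have k2: "k \<ge> 2" using k0 False by presburger
      show ?thesis
      proof (cases "q = 1")
        case True
        have "a \<noteq> 0" using jq a True k2 by (cases a) auto
        then obtain b where b: "a = Suc b" by (cases a) auto
        have "b < 2^b" by (rule less_exp)
        moreover have "2^b*4 = k + 2" using jq True a b by simp
        ultimately have "b < k" by linarith
        then obtain X where X: "n X = b" using less.IH by blast
        have "n (w X []) + 2 = 2^(n X+1+1) * 1" by (rule L3)
        also have "\<dots> = k + 2" using jq True a b X by simp
        finally have "n (w X []) = k" by simp
        then show ?thesis by blast
      next
        case False
        then have q3: "q \<ge> 3" using q0 jq by presburger
        have "a < 2^a" by (rule less_exp)
        moreover have "2*2^a*3 \<le> 2^j*q" using a q3 by simp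
        ultimately have "a < k" using jq by linarith
        then obtain X where X: "n X = a" using less.IH by blast
        have "2*q \<le> 2^j*q" using a by simp
        then have "q - 2 < k" using jq q3 by linarith
        then obtain t' where t': "n t' = q - 2" using less.IH by blast
        have od: "odd (q - 2)" using jq q3 by auto
        obtain Y Ys where tY: "t' = v Y Ys"
        proof (cases t')
          case e then show ?thesis using t' od by simp
        next
          case (w A B) then show ?thesis using t' od even_w[of A B] by (simp del: n.simps)
        qed
        have "n (w X (Y#Ys)) + 2 = 2^(n X+1) * (n (v Y Ys) + 2)" by (rule L4)
        also have "\<dots> = 2^j * q"
        proof -
          have h: "n (v Y Ys) + 2 = q" using t' tY q3 by simp
          show ?thesis unfolding h X a by simp
        qed
        finally have "n (w X (Y#Ys)) = k" using jq by linarith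
        then show ?thesis by blast
      qed
    qed
  qed
qed

theorem proposition2:
  shows "bij n"
proof (rule bijI)
  show "inj n" by (rule injI) (rule inj_aux)
  show "surj n" using surj_aux by (metis surjI)
qed

end
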